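(* Let $(G,u)$ be a countable unperforated partially ordered abelian group with order unit $u$. Then $$\bigcap_{\tau\in S(G,u)}\tau(G)=\{\lambda\in\mathbb R:\ \exists g\in G \text{ such that } \tau(g)=\lambda \text{ for all }\tau\in S(G,u)\}.$$
   Context: $u$ is an order unit: for every $g$ there is $n\in\mathbb Z^+$ with $nu-g\ge0$. Unperforated: $ng\ge0$ for some $n\in\mathbb N$ implies $g\ge0$. $S(G,u)$ is the set of states, i.e. homomorphisms $\tau:G\to\mathbb R$ with $\tau(G^+)\ge0$ and $\tau(u)=1$. *)

theory Defs
  imports Complex_Main "HOL-Library.Countable"
begin

text \<open>A partially ordered abelian group is modelled by the type class ordered_ab_group_add
  (partial order, translation invariant); the positive cone is the set of elements \<ge> 0.\<close>

primrec natmul :: "nat \<Rightarrow> 'a::monoid_add \<Rightarrow> 'a" where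
  "natmul 0 g = 0"
| "natmul (Suc n) g = g + natmul n g"

definition order_unit :: "'a::ordered_ab_group_add \<Rightarrow> bool" where
  "order_unit u \<longleftrightarrow> (\<forall>g. \<exists>n::nat. n > 0 \<and> natmul n u - g \<ge> 0)"

definition unperforated :: "'a::ordered_ab_group_add itself \<Rightarrow> bool" where
  "unperforated _ \<longleftrightarrow> (\<forall>(g::'a) (n::nat). n > 0 \<and> natmul n g \<ge> 0 \<longrightarrow> g \<ge> 0)"

definition states :: "'a::ordered_ab_group_add \<Rightarrow> ('a \<Rightarrow> real) set" where
  "states u = {\<tau>. (\<forall>a b. \<tau> (a + b) = \<tau> a + \<tau> b) \<and> (\<forall>g. g \<ge> 0 \<longrightarrow> \<tau> g \<ge> 0) \<and> \<tau> u = 1}"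

end

theory Submission
  imports Defs "HOL-Analysis.Analysis"
begin
lemma closed_states:
  fixes u :: "'a::{ordered_ab_group_add, countable}"
  shows "closed (states u)"
proof -
  have eq: "states u = (\<Inter>a. \<Inter>b. {\<tau>::'a\<Rightarrow>real. \<tau> (a + b) = \<tau> a + \<tau> b})
      \<inter> (\<Inter>g\<in>{g. g \<ge> 0}. {\<tau>::'a\<Rightarrow>real. 0 \<le> \<tau> g}) \<inter> {\<tau>. \<tau> u = 1}"
    unfolding states_def by auto
  have c: "continuous_on UNIV (\<lambda>\<tau>::'a\<Rightarrow>real. \<tau> i)" for i by simp
  have c2: "continuous_on UNIV (\<lambda>\<tau>::'a\<Rightarrow>real. \<tau> a + \<tau> b)" for a b
    by (intro continuous_on_add c)
  show ?thesis unfolding eq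
  proof (intro closed_Int closed_INT ballI)
    fix a b show "closed {\<tau>::'a\<Rightarrow>real. \<tau> (a + b) = \<tau> a + \<tau> b}"
      by (rule closed_Collect_eq[OF c c2])
  next
    fix g show "closed {\<tau>::'a\<Rightarrow>real. 0 \<le> \<tau> g}"
      by (rule closed_Collect_le[OF continuous_on_const c])
  next
    show "closed {\<tau>::'a\<Rightarrow>real. \<tau> u = 1}"
      by (rule closed_Collect_eq[OF c continuous_on_const])
  qed
qed

theorem mainTheorem10:
  fixes u :: "'a::{ordered_ab_group_add, countable}"
  assumes "order_unit u"
    and "unperforated TYPE('a)"
  shows "(\<Inter>\<tau>\<in>states u. range \<tau>) = {r. \<exists>g. \<forall>\<tau>\<in>states u. \<tau> g = (r::real)}"
proof
  show "{r. \<exists>g. \<forall>\<tau>\<in>states u. \<tau> g = (r::real)} \<subseteq> (\<Inter>\<tau>\<in>states u. range \<tau>)"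
    by auto
next
  show "(\<Inter>\<tau>\<in>states u. range \<tau>) \<subseteq> {r. \<exists>g. \<forall>\<tau>\<in>states u. \<tau> g = (r::real)}"
  proof
    fix r assume r: "r \<in> (\<Inter>\<tau>\<in>states u. range \<tau>)"
    define S where "S = states u"
    show "r \<in> {r. \<exists>g. \<forall>\<tau>\<in>states u. \<tau> g = (r::real)}"
    proof (cases "S = {}")
      case True then show ?thesis by (auto simp: S_def)
    next
      case False
      define X where "X = top_of_set S"
      define F where "F = (\<lambda>g. {\<tau>\<in>S. \<tau> g = r})"
      have cm: "completely_metrizable_space X"
        unfolding X_def S_def
        by (rule completely_metrizable_space_closedin[OF completely_metrizable_space_euclidean]) (simp add: closed_states flip: closed_closedin)
      have cnt: "countable (range F)" by simp
      have UF: "\<Union>(range F) = S" using r by (auto simp: F_def S_def)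
      have top: "topspace X = S" by (simp add: X_def)
      have "X interior_of \<Union>(range F) = S"
        using UF top by (metis interior_of_topspace)
      with False have "X interior_of \<Union>(range F) \<noteq> {}" by simp
      then obtain T where "T \<in> range F" and nt: "\<not> (closedin X T \<and> X interior_of T = {})"
        using Baire_category_alt[OF disjI1[OF cm] cnt] by blast
      then obtain g where Tg: "T = F g" by blast
      have clo: "closedin X (F g)"
      proof -
        have "closed {\<tau>::'a\<Rightarrow>real. \<tau> g = r}"
          by (intro closed_Collect_eq continuous_on_const) simp
        then have "closedin X (S \<inter> {\<tau>::'a\<Rightarrow>real. \<tau> g = r})"
          unfolding X_def by (simp add: closedin_closed_Int)
        moreover have "S \<inter> {\<tau>::'a\<Rightarrow>real. \<tau> g = r} = F g" by (auto simp: F_def)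
        ultimately show ?thesis by simp
      qed
      with nt Tg obtain p where "p \<in> X interior_of F g" by blast
      then obtain V where V: "openin X V" "p \<in> V" "V \<subseteq> F g"
        by (auto simp: interior_of_def)
      then obtain U where U: "open U" "V = U \<inter> S"
        by (auto simp: X_def openin_open)
      have pS: "p \<in> S" and pg: "p g = r" using V U by (auto simp: F_def)
      have "\<forall>\<tau>\<in>S. \<tau> g = r"
      proof
        fix s assume sS: "s \<in> S"
        define h where "h = (\<lambda>d::real. (\<lambda>x. p x + d * (s x - p x)))"
        have hc: "continuous_on UNIV h"
          unfolding h_def by (intro continuous_on_coordinatewise_then_product continuous_intros)
        have "(h \<longlongrightarrow> h 0) (at_right 0)"
          using hc by (simp add: continuous_on_def filterlim_at_split)
        moreover have "h 0 = p" by (simp add: h_def)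
        ultimately have "\<forall>\<^sub>F d in at_right 0. h d \<in> U"
          using U V by (intro topological_tendstoD) auto
        moreover have "\<forall>\<^sub>F d in at_right (0::real). 0 < d \<and> d < 1"
          by (intro eventually_conj eventually_at_right_less) (simp add: eventually_at_right_field; auto intro!: exI[of _ 1])
        ultimately have "\<forall>\<^sub>F d in at_right (0::real). h d \<in> U \<and> 0 < d \<and> d < 1"
          by (rule eventually_conj)
        then obtain d where d: "h d \<in> U" "0 < d" "d < 1"
          using eventually_happens trivial_limit_at_right_real by blast
        have "h d \<in> S"
        proof -
          have "h d = (\<lambda>x. (1 - d) * p x + d * s x)" by (auto simp: h_def algebra_simps)
          moreover have "\<forall>a b. (1 - d) * p (a + b) + d * s (a + b) = ((1 - d) * p a + d * s a) + ((1 - d) * p b + d * s b)"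
            using pS sS by (simp add: S_def states_def distrib_left)
          moreover have "\<forall>g. g \<ge> 0 \<longrightarrow> (1 - d) * p g + d * s g \<ge> 0"
            using pS sS d by (simp add: S_def states_def)
          moreover have "(1 - d) * p u + d * s u = 1"
            using pS sS by (simp add: S_def states_def)
          ultimately show ?thesis unfolding S_def states_def by simp
        qed
        with d U V have "h d \<in> F g" by blast
        then have "p g + d * (s g - p g) = r" by (simp add: F_def h_def)
        with pg d show "s g = r" by simp
      qed
      then show ?thesis by (auto simp: S_def)
    qed
  qed
qed

end
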